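(* Let $\psi:C_Z\to\mathbb{R}$ be an increasing convex functional such that $\lim_{z\to+\infty}\psi(n(Z-z)^+)=\psi(0)$ for every $n\in\mathbb{N}$. Then for every $X\in C_Z$ there exists $\varepsilon>0$ with $\lim_{z\to+\infty}\psi(X+\varepsilon(Z-z)^+)=\psi(X)$.
   Context: Fix integers $J\ge0$, $T\ge1$. $\Omega$ is a non-empty subset of $((0,\infty)\times\mathbb{R}^J)^T$ with the Euclidean metric. $Z:\Omega\to[1,\infty)$ is continuous with $\{\omega\in\Omega:Z(\omega)\le z\}$ compact for every $z\in\mathbb{R}_+$. $C_Z$ is the space of continuous $X:\Omega\to\mathbb{R}$ with $X/Z$ bounded. $\psi$ increasing means $\psi(X)\ge\psi(Y)$ whenever $X\ge Y$. *)

theory Defs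
  imports "HOL-Analysis.Analysis"
begin

text \<open>Points of ((0,inf) x R^J)^T are encoded as vectors in real^'n (Euclidean metric),
  where the coordinates are indexed through a bijection e : {..<T} x {..J} -> 'n;
  coordinate e(t,0) is the positive component at period t, e(t,j) for 1<=j<=J the R^J part.\<close>

definition state_space :: "nat \<Rightarrow> nat \<Rightarrow> (nat \<times> nat \<Rightarrow> 'n::finite) \<Rightarrow> (real^'n) set" where
  "state_space T J e = {\<omega>. \<forall>t<T. \<omega> $ e (t, 0) > 0}"

definition CZ :: "'a::topological_space set \<Rightarrow> ('a \<Rightarrow> real) \<Rightarrow> ('a \<Rightarrow> real) set" where
  "CZ \<Omega> Z = {X. continuous_on \<Omega> X \<and> (\<exists>c. \<forall>\<omega>\<in>\<Omega>. \<bar>X \<omega> / Z \<omega>\<bar> \<le> c)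
                 \<and> (\<forall>\<omega>. \<omega> \<notin> \<Omega> \<longrightarrow> X \<omega> = 0)}"

definition increasing_on_CZ :: "'a set \<Rightarrow> ('a \<Rightarrow> real) set \<Rightarrow> (('a \<Rightarrow> real) \<Rightarrow> real) \<Rightarrow> bool" where
  "increasing_on_CZ \<Omega> C \<psi> \<longleftrightarrow>
     (\<forall>X\<in>C. \<forall>Y\<in>C. (\<forall>\<omega>\<in>\<Omega>. X \<omega> \<ge> Y \<omega>) \<longrightarrow> \<psi> X \<ge> \<psi> Y)"

definition convex_on_CZ :: "('a \<Rightarrow> real) set \<Rightarrow> (('a \<Rightarrow> real) \<Rightarrow> real) \<Rightarrow> bool" where
  "convex_on_CZ C \<psi> \<longleftrightarrow>
     (\<forall>X\<in>C. \<forall>Y\<in>C. \<forall>l::real. 0 \<le> l \<and> l \<le> 1 \<longrightarrow>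
        \<psi> (\<lambda>\<omega>. l * X \<omega> + (1 - l) * Y \<omega>) \<le> l * \<psi> X + (1 - l) * \<psi> Y)"

definition shiftZ :: "'a set \<Rightarrow> ('a \<Rightarrow> real) \<Rightarrow> ('a \<Rightarrow> real) \<Rightarrow> real \<Rightarrow> real \<Rightarrow> 'a \<Rightarrow> real" where
  "shiftZ \<Omega> Z X c z = (\<lambda>\<omega>. if \<omega> \<in> \<Omega> then X \<omega> + c * max 0 (Z \<omega> - z) else 0)"

end

theory Submission
  imports Defs
begin

lemma CZ_scale:
  assumes "X \<in> CZ \<Omega> Z"
  shows "(\<lambda>\<omega>. a * X \<omega>) \<in> CZ \<Omega> Z"
proof -
  from assms obtain c where c: "\<forall>\<omega>\<in>\<Omega>. \<bar>X \<omega> / Z \<omega>\<bar> \<le> c"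
    and ct: "continuous_on \<Omega> X" and z: "\<forall>\<omega>. \<omega> \<notin> \<Omega> \<longrightarrow> X \<omega> = 0"
    unfolding CZ_def by blast
  have "\<forall>\<omega>\<in>\<Omega>. \<bar>a * X \<omega> / Z \<omega>\<bar> \<le> \<bar>a\<bar> * c"
  proof
    fix \<omega> assume "\<omega> \<in> \<Omega>"
    then have "\<bar>X \<omega> / Z \<omega>\<bar> \<le> c" using c by blast
    then have "\<bar>a\<bar> * \<bar>X \<omega> / Z \<omega>\<bar> \<le> \<bar>a\<bar> * c" by (rule mult_left_mono) simp
    moreover have "\<bar>a * X \<omega> / Z \<omega>\<bar> = \<bar>a\<bar> * \<bar>X \<omega> / Z \<omega>\<bar>"
      by (simp only: abs_mult times_divide_eq_right[symmetric])
    ultimately show "\<bar>a * X \<omega> / Z \<omega>\<bar> \<le> \<bar>a\<bar> * c" by linarith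
  qed
  then show ?thesis using ct z unfolding CZ_def
    by (auto intro!: continuous_intros)
qed

lemma CZ_shift:
  assumes "X \<in> CZ \<Omega> Z" and Zcont: "continuous_on \<Omega> Z" and Zge: "\<forall>\<omega>\<in>\<Omega>. Z \<omega> \<ge> 1"
  shows "shiftZ \<Omega> Z X a z \<in> CZ \<Omega> Z"
proof -
  from assms obtain c where c: "\<forall>\<omega>\<in>\<Omega>. \<bar>X \<omega> / Z \<omega>\<bar> \<le> c"
    and ct: "continuous_on \<Omega> X" and z: "\<forall>\<omega>. \<omega> \<notin> \<Omega> \<longrightarrow> X \<omega> = 0"
    unfolding CZ_def by blast
  have cont: "continuous_on \<Omega> (shiftZ \<Omega> Z X a z)"
  proof -
    have "continuous_on \<Omega> (\<lambda>\<omega>. X \<omega> + a * max 0 (Z \<omega> - z))"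
      using ct Zcont by (auto intro!: continuous_intros)
    then show ?thesis
      by (rule continuous_on_cong[THEN iffD1, rotated 2]) (auto simp: shiftZ_def)
  qed
  have "\<forall>\<omega>\<in>\<Omega>. \<bar>shiftZ \<Omega> Z X a z \<omega> / Z \<omega>\<bar> \<le> c + \<bar>a\<bar> * (1 + \<bar>z\<bar>)"
  proof
    fix \<omega> assume w: "\<omega> \<in> \<Omega>"
    then have Z1: "Z \<omega> \<ge> 1" using Zge by blast
    have "\<bar>X \<omega> / Z \<omega>\<bar> \<le> c" using c w by blast
    have m: "max 0 (Z \<omega> - z) \<le> Z \<omega> * (1 + \<bar>z\<bar>)"
      proof -
      have "\<bar>z\<bar> \<le> Z \<omega> * \<bar>z\<bar>" using Z1 mult_right_mono[OF Z1, of "\<bar>z\<bar>"] by simp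
      then show ?thesis using Z1 by (simp add: algebra_simps)
    qed
    have "\<bar>a * max 0 (Z \<omega> - z) / Z \<omega>\<bar> = \<bar>a\<bar> * (max 0 (Z \<omega> - z) / Z \<omega>)"
      using Z1 by (simp add: abs_mult)
    also have "\<dots> \<le> \<bar>a\<bar> * (1 + \<bar>z\<bar>)"
      using m Z1 by (intro mult_left_mono) (simp_all add: divide_le_eq mult.commute)
    finally have "\<bar>a * max 0 (Z \<omega> - z) / Z \<omega>\<bar> \<le> \<bar>a\<bar> * (1 + \<bar>z\<bar>)" .
    moreover have "shiftZ \<Omega> Z X a z \<omega> / Z \<omega> = X \<omega> / Z \<omega> + a * max 0 (Z \<omega> - z) / Z \<omega>"
      using w by (simp add: shiftZ_def add_divide_distrib)
    ultimately show "\<bar>shiftZ \<Omega> Z X a z \<omega> / Z \<omega>\<bar> \<le> c + \<bar>a\<bar> * (1 + \<bar>z\<bar>)"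
      using \<open>\<bar>X \<omega> / Z \<omega>\<bar> \<le> c\<close> by linarith
  qed
  then show ?thesis using cont unfolding CZ_def by (auto simp: shiftZ_def)
qed

theorem lemmaA2:
  fixes T J :: nat and e :: "nat \<times> nat \<Rightarrow> 'n::finite"
    and \<Omega> :: "(real^'n) set" and Z :: "real^'n \<Rightarrow> real"
    and \<psi> :: "(real^'n \<Rightarrow> real) \<Rightarrow> real"
  assumes T: "T \<ge> 1"
    and e: "bij_betw e ({..<T} \<times> {..J}) UNIV"
    and \<Omega>sub: "\<Omega> \<subseteq> state_space T J e" and \<Omega>ne: "\<Omega> \<noteq> {}"
    and Zcont: "continuous_on \<Omega> Z" and Zge: "\<forall>\<omega>\<in>\<Omega>. Z \<omega> \<ge> 1"
    and Zcpt: "\<forall>z::real. z \<ge> 0 \<longrightarrow> compact {\<omega>\<in>\<Omega>. Z \<omega> \<le> z}"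
    and incr: "increasing_on_CZ \<Omega> (CZ \<Omega> Z) \<psi>"
    and conv: "convex_on_CZ (CZ \<Omega> Z) \<psi>"
    and lim: "\<forall>n::nat. ((\<lambda>z. \<psi> (shiftZ \<Omega> Z (\<lambda>_. 0) (real n) z)) \<longlongrightarrow> \<psi> (\<lambda>_. 0)) at_top"
  shows "\<forall>X\<in>CZ \<Omega> Z. \<exists>\<epsilon>>0. ((\<lambda>z. \<psi> (shiftZ \<Omega> Z X \<epsilon> z)) \<longlongrightarrow> \<psi> X) at_top"
proof
  fix X assume X: "X \<in> CZ \<Omega> Z"
  have Xz: "\<forall>\<omega>. \<omega> \<notin> \<Omega> \<longrightarrow> X \<omega> = 0" using X unfolding CZ_def by blast
  have zero: "(\<lambda>_. 0::real) \<in> CZ \<Omega> Z" unfolding CZ_def by auto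
  define A where "A = \<psi> (\<lambda>\<omega>. 2 * X \<omega>) + \<psi> (\<lambda>_. 0) - 2 * \<psi> X"
  have "((\<lambda>z. \<psi> (shiftZ \<Omega> Z X 1 z)) \<longlongrightarrow> \<psi> X) at_top"
  proof (rule tendstoI)
    fix ee :: real assume ee: "ee > 0"
    obtain n :: nat where n: "(\<bar>A\<bar> + 1) / ee + 2 < real n" using reals_Archimedean2 by blast
    have n2: "real n > 2" using n ee by (smt (verit) divide_nonneg_pos)
    have nA: "(\<bar>A\<bar> + 1) / real n < ee"
      using n n2 ee by (simp add: divide_less_eq field_simps)
    have ev: "eventually (\<lambda>z. dist (\<psi> (shiftZ \<Omega> Z (\<lambda>_. 0) (real n) z)) (\<psi> (\<lambda>_. 0)) < 1) at_top"
      using lim tendstoD by (metis zero_less_one)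
    show "eventually (\<lambda>z. dist (\<psi> (shiftZ \<Omega> Z X 1 z)) (\<psi> X) < ee) at_top"
    proof (rule eventually_mono[OF ev])
      fix z assume dz: "dist (\<psi> (shiftZ \<Omega> Z (\<lambda>_. 0) (real n) z)) (\<psi> (\<lambda>_. 0)) < 1"
      have dd: "real n - 1 \<noteq> 0" "real n \<noteq> 0" using n2 by simp_all
      define t where "t = real n / (real n - 1)"
      define Y where "Y = (\<lambda>\<omega>. t * X \<omega>)"
      define S where "S = shiftZ \<Omega> Z (\<lambda>_. 0) (real n) z"
      define l1 where "l1 = (real n - 2) / (real n - 1)"
      define l2 where "l2 = (real n - 1) / real n"
      have X2: "(\<lambda>\<omega>. 2 * X \<omega>) \<in> CZ \<Omega> Z" using CZ_scale[OF X] .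
      have YC: "Y \<in> CZ \<Omega> Z" unfolding Y_def using CZ_scale[OF X] .
      have SC: "S \<in> CZ \<Omega> Z" unfolding S_def using CZ_shift[OF zero Zcont Zge] .
      have FC: "shiftZ \<Omega> Z X 1 z \<in> CZ \<Omega> Z" using CZ_shift[OF X Zcont Zge] .
      have l1: "0 \<le> l1" "l1 \<le> 1" using n2 unfolding l1_def by (auto simp: divide_simps)
      have l2: "0 \<le> l2" "l2 \<le> 1" using n2 unfolding l2_def by (auto simp: divide_simps)
      have eqY: "Y = (\<lambda>\<omega>. l1 * X \<omega> + (1 - l1) * (2 * X \<omega>))"
      proof -
        have d: "real n - 1 \<noteq> 0" using n2 by simp
        have "2 - l1 = t" unfolding t_def l1_def using d by (simp add: field_simps)
        then have teq: "t = l1 + (1 - l1) * 2" by simp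
        show ?thesis unfolding Y_def teq by (simp add: fun_eq_iff algebra_simps)
      qed
      have eqF: "shiftZ \<Omega> Z X 1 z = (\<lambda>\<omega>. l2 * Y \<omega> + (1 - l2) * S \<omega>)"
        unfolding Y_def t_def l2_def S_def shiftZ_def using n2 Xz dd
        by (auto simp: fun_eq_iff field_simps)
      have iY: "\<psi> Y \<le> l1 * \<psi> X + (1 - l1) * \<psi> (\<lambda>\<omega>. 2 * X \<omega>)"
        unfolding eqY using conv[unfolded convex_on_CZ_def, rule_format, OF X X2, of l1] l1 by blast
      have iF: "\<psi> (shiftZ \<Omega> Z X 1 z) \<le> l2 * \<psi> Y + (1 - l2) * \<psi> S"
        unfolding eqF using conv[unfolded convex_on_CZ_def, rule_format, OF YC SC, of l2] l2 by blast
      have lo: "\<psi> (shiftZ \<Omega> Z X 1 z) \<ge> \<psi> X"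
        using incr FC X unfolding increasing_on_CZ_def by (auto simp: shiftZ_def)
      have iS: "\<psi> S < \<psi> (\<lambda>_. 0) + 1" using dz unfolding S_def dist_real_def by linarith
      have "l2 * \<psi> Y \<le> l2 * (l1 * \<psi> X + (1 - l1) * \<psi> (\<lambda>\<omega>. 2 * X \<omega>))"
        using mult_left_mono[OF iY l2(1)] .
      also have "\<dots> = (real n - 2) / real n * \<psi> X + \<psi> (\<lambda>\<omega>. 2 * X \<omega>) / real n"
      proof -
        have p1: "l2 * l1 = (real n - 2) / real n" unfolding l1_def l2_def using dd by (simp add: field_simps)
        have p2: "l2 * (1 - l1) = 1 / real n" unfolding l1_def l2_def using dd by (simp add: field_simps)
        have "l2 * (l1 * \<psi> X + (1 - l1) * \<psi> (\<lambda>\<omega>. 2 * X \<omega>))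
            = (l2 * l1) * \<psi> X + (l2 * (1 - l1)) * \<psi> (\<lambda>\<omega>. 2 * X \<omega>)" by (simp only: algebra_simps)
        then show ?thesis unfolding p1 p2 by simp
      qed
      finally have a1: "l2 * \<psi> Y \<le> (real n - 2) / real n * \<psi> X + \<psi> (\<lambda>\<omega>. 2 * X \<omega>) / real n" .
      have a2: "(1 - l2) * \<psi> S < (\<psi> (\<lambda>_. 0) + 1) / real n"
        unfolding l2_def using n2 iS by (simp add: field_simps)
      have "\<psi> (shiftZ \<Omega> Z X 1 z) - \<psi> X < (A + 1) / real n"
      proof -
        have f1: "\<psi> (shiftZ \<Omega> Z X 1 z) < (real n - 2) / real n * \<psi> X + \<psi> (\<lambda>\<omega>. 2 * X \<omega>) / real n
                 + (\<psi> (\<lambda>_. 0) + 1) / real n" using iF a1 a2 by linarith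
        have f2: "(real n - 2) / real n * \<psi> X + \<psi> (\<lambda>\<omega>. 2 * X \<omega>) / real n
                 + (\<psi> (\<lambda>_. 0) + 1) / real n - \<psi> X = (A + 1) / real n"
          unfolding A_def using dd by (simp add: field_simps)
        show ?thesis using f1 f2 by linarith
      qed
      also have "\<dots> \<le> (\<bar>A\<bar> + 1) / real n" using n2 by (simp add: divide_right_mono)
      finally show "dist (\<psi> (shiftZ \<Omega> Z X 1 z)) (\<psi> X) < ee"
        using lo nA unfolding dist_real_def by linarith
    qed
  qed
  then show "\<exists>\<epsilon>>0. ((\<lambda>z. \<psi> (shiftZ \<Omega> Z X \<epsilon> z)) \<longlongrightarrow> \<psi> X) at_top"
    by (intro exI[of _ 1]) simp
qed

end
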